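(* Let $\mathsf{k}$ be a field, $n\ge 2$, $R=\mathsf{k}[x_1,\dots,x_r]$, $S=R[t]$, $A=\mathsf{k}[t]/(t^n)$. Let $F_B\in Q_R$ be homogeneous of degree $j_B$ and $B=R/\operatorname{Ann}_R(F_B)$. Put $G_0=F_B$ and let $G_1,\dots,G_{n-1}\in Q_R$ be homogeneous with $\deg G_i=j_B+i$. Let $$F=T^{[n-1]}G_0+T^{[n-2]}G_1+\cdots+T^{[n-1-i]}G_i+\cdots+G_{n-1}\in Q_S,$$ and $C=S/\operatorname{Ann}_S(F)$. Define ideals $I_0\subseteq I_1\subseteq\cdots\subseteq I_{n-1}\subseteq R$ by $I_0=\operatorname{Ann}_R(G_0)$ and $I_i=(I_{i-1}:\operatorname{Ann}_R(G_i))$ for $1\le i\le n-1$. (1) If $I_i\circ G_{n-1-i}\subseteq R\circ F_B$ for all $i=0,\dots,n-1$, then the sequence $\mathsf{k}\to A\xrightarrow{\iota} C\xrightarrow{\pi} B\to\mathsf{k}$ is coexact and $C$ is a free extension with base $A$ and fiber $B$ (via $\iota,\pi$). (2) Conversely, if $C$ is a free extension with base $A$ and fiber $B$ (via $\iota,\pi$), then $I_0\circ G_i\subseteq \sum_{j=0}^{i-1}R\circ G_j$ for every $i\in[1,n-1]$.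
   Context: All rings are graded; $R$ standard graded. $Q_R=\mathsf{k}_{DP}[X_1,\dots,X_r]$ and $Q_S=\mathsf{k}_{DP}[X_1,\dots,X_r,T]$ are divided power rings (basis of divided monomials $X^{[a]}=X_1^{[a_1]}\cdots$, with $X_k^{[i]}X_k^{[j]}=\binom{i+j}{j}X_k^{[i+j]}$), on which $R$ (resp. $S$) acts by contraction: $x_i^s\circ X_i^{[k]}=X_i^{[k-s]}$ if $k\ge s$ and $0$ otherwise, $x_i$ acting trivially on the other variables, and similarly $t$ on $T$. For $G\in Q_R$, $R\circ G$ is the $R$-submodule generated by $G$ and $\operatorname{Ann}_R(G)=\{g\in R: g\circ G=0\}$. For ideals, $(I:J)=\{f\in R: fJ\subseteq I\}$. The map $\iota:A\to C$ is induced by the inclusion $\mathsf{k}[t]\subset S$ and $\pi:C\to B$ by $S\to R$, $x_i\mapsto x_i$, $t\mapsto 0$. For graded Artinian algebras $A,B,C$ with maps $\iota:A\to C$, $\pi:C\to B$, $C$ is a free extension with base $A$ and fiber $B$ if $\iota$ makes $C$ a free $A$-module and $\pi$ is surjective with $\ker\pi=(\iota(A_+))C$, where $A_+$ is the ideal of positive-degree elements; the sequence $\mathsf{k}\to A\to C\to B\to\mathsf{k}$ is coexact if $\pi$ is surjective and $\ker\pi=(\iota(A_+))C$. *)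

theory Defs
  imports "HOL-Library.Poly_Mapping" "HOL-Computational_Algebra.Polynomial"
begin

text \<open>Polynomial rings over a field 'k in variables indexed by a type 'x are represented as
  poly_mapping from exponent vectors to coefficients (exponent vector to coefficient), with the library's
  convolution product.  R = k[x_v | v :: 'v] with 'v finite (r = CARD('v));
  S = R[t] uses the variable type 'v option, where None is t and Some v is x_v.
  Divided power rings Q_R, Q_S use the same underlying type, the key a standing for the
  divided monomial X^[a]; their (divided power) product is dp_mult.\<close>

type_synonym ('x, 'k) mpoly = "('x \<Rightarrow>\<^sub>0 nat) \<Rightarrow>\<^sub>0 'k"

definition mdeg :: "('x \<Rightarrow>\<^sub>0 nat) \<Rightarrow> nat" where
  "mdeg a = (\<Sum>v\<in>Poly_Mapping.keys a. Poly_Mapping.lookup a v)"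

definition homogeneous :: "nat \<Rightarrow> ('x, 'k::zero) mpoly \<Rightarrow> bool" where
  "homogeneous d G \<longleftrightarrow> (\<forall>a\<in>Poly_Mapping.keys G. mdeg a = d)"

definition dp_mult :: "('x, 'k::comm_ring_1) mpoly \<Rightarrow> ('x, 'k) mpoly \<Rightarrow> ('x, 'k) mpoly" where
  "dp_mult G H = (\<Sum>a\<in>Poly_Mapping.keys G. \<Sum>b\<in>Poly_Mapping.keys H.
     Poly_Mapping.single (a + b)
       (Poly_Mapping.lookup G a * Poly_Mapping.lookup H b * of_nat (\<Prod>v\<in>Poly_Mapping.keys (a + b). (Poly_Mapping.lookup a v + Poly_Mapping.lookup b v) choose Poly_Mapping.lookup b v)))"

definition contract :: "('x, 'k::comm_ring_1) mpoly \<Rightarrow> ('x, 'k) mpoly \<Rightarrow> ('x, 'k) mpoly" where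
  "contract f G = (\<Sum>s\<in>Poly_Mapping.keys f. \<Sum>a\<in>Poly_Mapping.keys G.
     (if (\<forall>v. Poly_Mapping.lookup s v \<le> Poly_Mapping.lookup a v)
      then Poly_Mapping.single (a - s) (Poly_Mapping.lookup f s * Poly_Mapping.lookup G a) else 0))"

definition Ann :: "('x, 'k::comm_ring_1) mpoly \<Rightarrow> ('x, 'k) mpoly set" where
  "Ann G = {g. contract g G = 0}"

definition cyc :: "('x, 'k::comm_ring_1) mpoly \<Rightarrow> ('x, 'k) mpoly set" where
  "cyc G = {contract f G | f. True}"

definition contract_set :: "('x, 'k::comm_ring_1) mpoly set \<Rightarrow> ('x, 'k) mpoly \<Rightarrow> ('x, 'k) mpoly set" where
  "contract_set I G = {contract f G | f. f \<in> I}"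

definition sum_cyc :: "(nat \<Rightarrow> ('x, 'k::comm_ring_1) mpoly) \<Rightarrow> nat \<Rightarrow> ('x, 'k) mpoly set" where
  "sum_cyc G i = {(\<Sum>j<i. contract (f j) (G j)) | f. True}"

definition colon :: "'a::comm_ring_1 set \<Rightarrow> 'a set \<Rightarrow> 'a set" where
  "colon I J = {f. \<forall>g\<in>J. f * g \<in> I}"

fun Iseq :: "(nat \<Rightarrow> ('x, 'k::comm_ring_1) mpoly) \<Rightarrow> nat \<Rightarrow> ('x, 'k) mpoly set" where
  "Iseq G 0 = Ann (G 0)"
| "Iseq G (Suc i) = colon (Iseq G i) (Ann (G (Suc i)))"

definition lift_mon :: "('v::finite \<Rightarrow>\<^sub>0 nat) \<Rightarrow> ('v option \<Rightarrow>\<^sub>0 nat)" where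
  "lift_mon a = (\<Sum>v\<in>UNIV. Poly_Mapping.single (Some v) (Poly_Mapping.lookup a v))"

definition lift :: "('v::finite, 'k::comm_ring_1) mpoly \<Rightarrow> ('v option, 'k) mpoly" where
  "lift G = (\<Sum>a\<in>Poly_Mapping.keys G. Poly_Mapping.single (lift_mon a) (Poly_Mapping.lookup G a))"

definition restr_mon :: "('v::finite option \<Rightarrow>\<^sub>0 nat) \<Rightarrow> ('v \<Rightarrow>\<^sub>0 nat)" where
  "restr_mon m = (\<Sum>v\<in>UNIV. Poly_Mapping.single v (Poly_Mapping.lookup m (Some v)))"

definition eval_t0 :: "('v::finite option, 'k::comm_ring_1) mpoly \<Rightarrow> ('v, 'k) mpoly" where
  "eval_t0 g = (\<Sum>m\<in>Poly_Mapping.keys g. if Poly_Mapping.lookup m None = 0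
       then Poly_Mapping.single (restr_mon m) (Poly_Mapping.lookup g m) else 0)"

definition tpoly :: "'k::comm_ring_1 poly \<Rightarrow> ('v option, 'k) mpoly" where
  "tpoly p = (\<Sum>i\<le>degree p. Poly_Mapping.single (Poly_Mapping.single None i) (coeff p i))"

definition Tdp :: "nat \<Rightarrow> ('v option, 'k::comm_ring_1) mpoly" where
  "Tdp k = Poly_Mapping.single (Poly_Mapping.single None k) 1"

definition Fdual :: "nat \<Rightarrow> (nat \<Rightarrow> ('v::finite, 'k::comm_ring_1) mpoly) \<Rightarrow> ('v option, 'k) mpoly" where
  "Fdual n G = (\<Sum>i<n. dp_mult (Tdp (n - 1 - i)) (lift (G i)))"

text \<open>Algebras: A = k[t]/(t^n) (elements represented by 'k poly),
  C = S / Ann_S(F), B = R / Ann_R(F_B).  The maps are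
  iota [p] = [tpoly p] and pi [g] = [eval_t0 g].  In A, the class of p is zero iff t^n divides p,
  and [p] \<in> A_+ iff the constant coefficient of p is 0.\<close>

definition pi_surj :: "('v::finite, 'k::comm_ring_1) mpoly \<Rightarrow> ('v option, 'k) mpoly \<Rightarrow> bool" where
  "pi_surj FB F \<longleftrightarrow> (\<forall>r. \<exists>g. eval_t0 g - r \<in> Ann FB)"

text \<open>ker pi = (iota(A_+)) C, both sides as sets of classes in C, written via representatives in S.\<close>
definition ker_eq :: "('v::finite, 'k::comm_ring_1) mpoly \<Rightarrow> ('v option, 'k) mpoly \<Rightarrow> bool" where
  "ker_eq FB F \<longleftrightarrow>
     (\<forall>g. eval_t0 g \<in> Ann FB \<longleftrightarrow>
        (\<exists>m (a :: nat \<Rightarrow> 'k poly) (c :: nat \<Rightarrow> ('v option, 'k) mpoly).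
           (\<forall>k<m. coeff (a k) 0 = 0) \<and> g - (\<Sum>k<m. tpoly (a k) * c k) \<in> Ann F))"

definition coexact :: "('v::finite, 'k::comm_ring_1) mpoly \<Rightarrow> ('v option, 'k) mpoly \<Rightarrow> bool" where
  "coexact FB F \<longleftrightarrow> pi_surj FB F \<and> ker_eq FB F"

text \<open>C is a free A-module via iota (A = k[t]/(t^n)): there is a basis [b_0],...,[b_{m-1}].\<close>
definition free_over_A :: "nat \<Rightarrow> ('v::finite option, 'k::comm_ring_1) mpoly \<Rightarrow> bool" where
  "free_over_A n F \<longleftrightarrow>
     (\<exists>m (b :: nat \<Rightarrow> ('v option, 'k) mpoly).
        (\<forall>g. \<exists>a :: nat \<Rightarrow> 'k poly. g - (\<Sum>j<m. tpoly (a j) * b j) \<in> Ann F) \<and>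
        (\<forall>a :: nat \<Rightarrow> 'k poly. (\<Sum>j<m. tpoly (a j) * b j) \<in> Ann F \<longrightarrow>
            (\<forall>j<m. [:0, 1:] ^ n dvd a j)))"

definition free_extension :: "nat \<Rightarrow> ('v::finite, 'k::comm_ring_1) mpoly \<Rightarrow> ('v option, 'k) mpoly \<Rightarrow> bool" where
  "free_extension n FB F \<longleftrightarrow> free_over_A n F \<and> pi_surj FB F \<and> ker_eq FB F"

end

theory Submission imports Defs "HOL-Library.FuncSet" begin

abbreviation "lk \<equiv> Poly_Mapping.lookup"
abbreviation "ks \<equiv> Poly_Mapping.keys"
abbreviation "sg \<equiv> Poly_Mapping.single"

lemma pm_expand: "(\<Sum>a\<in>ks p. sg a (lk p a)) = p"
  by (rule poly_mapping_eqI) (simp add: lookup_sum lookup_single when_def in_keys_iff cong: if_cong)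

lemma monsub_iff:
  fixes a s b :: "'x \<Rightarrow>\<^sub>0 nat"
  shows "((\<forall>v. lk s v \<le> lk a v) \<and> a - s = b) \<longleftrightarrow> a = b + s"
proof
  assume h: "(\<forall>v. lk s v \<le> lk a v) \<and> a - s = b"
  show "a = b + s"
    by (rule poly_mapping_eqI) (use h in \<open>auto simp: lookup_add lookup_minus\<close>)
next
  assume "a = b + s"
  then show "(\<forall>v. lk s v \<le> lk a v) \<and> a - s = b"
    by (auto simp: lookup_add)
qed

lemma lookup_contract:
  "lk (contract f G) b = (\<Sum>s\<in>ks f. lk f s * lk G (b + s))"
proof -
  have "lk (contract f G) b = (\<Sum>s\<in>ks f. \<Sum>a\<in>ks G. if a = b + s then lk f s * lk G a else 0)"
    unfolding contract_def lookup_sum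
    apply (rule sum.cong, simp, rule sum.cong, simp)
    subgoal for s a using monsub_iff[of s a b] by (auto simp: lookup_single when_def)
    done
  also have "\<dots> = (\<Sum>s\<in>ks f. lk f s * lk G (b + s))"
    by (rule sum.cong) (auto simp: in_keys_iff)
  finally show ?thesis .
qed

lemma lookup_contract_gen:
  assumes "finite A" "ks f \<subseteq> A"
  shows "lk (contract f G) b = (\<Sum>s\<in>A. lk f s * lk G (b + s))"
  unfolding lookup_contract
  by (rule sum.mono_neutral_left) (use assms in \<open>auto simp: in_keys_iff\<close>)

lemma contract_add_left: "contract (f + g) H = contract f H + contract g H"
proof (rule poly_mapping_eqI)
  fix b
  let ?A = "ks f \<union> ks g \<union> ks (f + g)"
  show "lk (contract (f + g) H) b = lk (contract f H + contract g H) b"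
  proof -
    have fin: "finite ?A" by simp
    show ?thesis
      unfolding lookup_add
      by (subst (1 2 3) lookup_contract_gen[OF fin]) (auto simp: lookup_add sum.distrib distrib_right)
  qed
qed

lemma contract_add_right: "contract f (G + H) = contract f G + contract f H"
  by (rule poly_mapping_eqI) (simp add: lookup_add lookup_contract sum.distrib distrib_left)

lemma contract_zero_left[simp]: "contract 0 H = 0"
  by (simp add: contract_def)
lemma contract_zero_right[simp]: "contract f 0 = 0"
  by (simp add: contract_def)

lemma contract_uminus_left: "contract (- f) (H :: ('x, 'k::comm_ring_1) mpoly) = - contract f H"
  using contract_add_left[of f "-f" H] by (simp add: eq_neg_iff_add_eq_0 add.commute)
lemma contract_diff_left: "contract (f - g) (H :: ('x, 'k::comm_ring_1) mpoly) = contract f H - contract g H"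
  using contract_add_left[of f "-g" H] contract_uminus_left[of g H] by simp
lemma contract_uminus_right: "contract f (- H :: ('x, 'k::comm_ring_1) mpoly) = - contract f H"
  using contract_add_right[of f H "-H"] by (simp add: eq_neg_iff_add_eq_0 add.commute)
lemma contract_diff_right: "contract f (G - H :: ('x, 'k::comm_ring_1) mpoly) = contract f G - contract f H"
  using contract_add_right[of f G "-H"] contract_uminus_right[of f H] by simp

lemma contract_sum_left: "contract (\<Sum>i\<in>I. f i) H = (\<Sum>i\<in>I. contract (f i) H)"
  by (induction I rule: infinite_finite_induct) (auto simp: contract_add_left)
lemma contract_sum_right: "contract f (\<Sum>i\<in>I. H i) = (\<Sum>i\<in>I. contract f (H i))"
  by (induction I rule: infinite_finite_induct) (auto simp: contract_add_right)

lemma lookup_contract_single: "lk (contract (sg s c) H) b = c * lk H (b + s)"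
  by (simp add: lookup_contract_gen[of "{s}"])

lemma contract_single_single:
  "contract (sg s c) (contract (sg u d) H) = contract (sg s c * sg u d) H"
  by (rule poly_mapping_eqI) (simp add: lookup_contract_single mult_single add.assoc add.commute[of u s] mult.assoc)

lemma mult_expand: "f * g = (\<Sum>l\<in>ks f. \<Sum>q\<in>ks g. sg l (lk f l) * sg q (lk g q))"
proof -
  have "f * g = (\<Sum>l\<in>ks f. sg l (lk f l)) * (\<Sum>q\<in>ks g. sg q (lk g q))"
    by (simp add: pm_expand)
  also have "\<dots> = (\<Sum>l\<in>ks f. \<Sum>q\<in>ks g. sg l (lk f l) * sg q (lk g q))"
    by (simp add: sum_product)
  finally show ?thesis .
qed

lemma contract_mult: "contract (f * g) H = contract f (contract g H)"
proof -
  have "contract f (contract g H) = contract (\<Sum>l\<in>ks f. sg l (lk f l)) (contract (\<Sum>q\<in>ks g. sg q (lk g q)) H)"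
    by (simp add: pm_expand)
  also have "\<dots> = (\<Sum>l\<in>ks f. \<Sum>q\<in>ks g. contract (sg l (lk f l)) (contract (sg q (lk g q)) H))"
    by (simp add: contract_sum_left contract_sum_right sum.swap[of _ "ks g"])
  also have "\<dots> = contract (f * g) H"
    by (subst mult_expand, simp add: contract_sum_left contract_single_single)
  finally show ?thesis by simp
qed


lemma single_mult_expand: "sg s c * q = (\<Sum>w\<in>ks q. sg (s + w) (c * lk q w))"
proof -
  have "sg s c * q = sg s c * (\<Sum>w\<in>ks q. sg w (lk q w))" by (simp add: pm_expand)
  also have "\<dots> = (\<Sum>w\<in>ks q. sg (s + w) (c * lk q w))"
    by (simp add: sum_distrib_left mult_single)
  finally show ?thesis .
qed

lemma lookup_const_mult: "lk (sg 0 c * r) u = c * lk r u"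
  by (simp add: single_mult_expand lookup_sum lookup_single when_def in_keys_iff cong: if_cong)

section \<open>Ideals in R\<close>

lemma Ann_mult: "f \<in> Ann H \<Longrightarrow> g * f \<in> Ann H"
  by (simp add: Ann_def contract_mult)
lemma Ann_add: "f \<in> Ann H \<Longrightarrow> g \<in> Ann H \<Longrightarrow> f + g \<in> Ann H"
  by (simp add: Ann_def contract_add_left)
lemma Ann_uminus: "f \<in> Ann (H :: ('x, 'k::comm_ring_1) mpoly) \<Longrightarrow> - f \<in> Ann H"
  by (simp add: Ann_def contract_uminus_left)
lemma Ann_zero: "0 \<in> Ann H"
  by (simp add: Ann_def)

lemma Iseq_ideal: "f \<in> Iseq G i \<Longrightarrow> g * f \<in> Iseq G i"
proof (induction i arbitrary: f g)
  case 0 then show ?case by (simp add: Ann_mult)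
next
  case (Suc i)
  show ?case unfolding Iseq.simps colon_def
  proof (intro CollectI ballI)
    fix h assume "h \<in> Ann (G (Suc i))"
    then have "f * h \<in> Iseq G i" using Suc.prems by (simp add: colon_def)
    then have "g * (f * h) \<in> Iseq G i" by (rule Suc.IH)
    then show "g * f * h \<in> Iseq G i" by (simp add: mult.assoc)
  qed
qed

lemma Iseq_mono_Suc: "Iseq G i \<subseteq> Iseq G (Suc i)"
  using Iseq_ideal[of _ G i] by (auto simp: colon_def mult.commute)

lemma Iseq_mono: "i \<le> j \<Longrightarrow> Iseq G i \<subseteq> Iseq G j"
  by (induction j rule: dec_induct) (use Iseq_mono_Suc in blast)+

lemma contract_comm: "contract f (contract g H) = contract g (contract f H)"
  by (metis contract_mult mult.commute)

lemma L_lemma: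
  fixes G :: "nat \<Rightarrow> ('x, 'k::comm_ring_1) mpoly"
  shows "contract f (G 0) = (\<Sum>i\<in>{1..s}. contract (q i) (G i)) \<Longrightarrow> f \<in> Iseq G s"
proof (induction s arbitrary: f q)
  case 0 then show ?case by (simp add: Ann_def)
next
  case (Suc s)
  show ?case unfolding Iseq.simps colon_def
  proof (intro CollectI ballI)
    fix u assume u: "u \<in> Ann (G (Suc s))"
    have "contract (f * u) (G 0) = contract u (contract f (G 0))"
      by (simp add: contract_mult contract_comm)
    also have "\<dots> = (\<Sum>i\<in>{1..Suc s}. contract u (contract (q i) (G i)))"
      using Suc.prems by (simp only: contract_sum_right)
    also have "\<dots> = (\<Sum>i\<in>{1..s}. contract (u * q i) (G i))"
    proof -
      have "contract u (contract (q (Suc s)) (G (Suc s))) = 0"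
        using u by (simp add: contract_comm[of u] Ann_def)
      then show ?thesis by (simp add: contract_mult)
    qed
    finally show "f * u \<in> Iseq G s" by (rule Suc.IH)
  qed
qed

lemma cyc_add: "x \<in> cyc H \<Longrightarrow> y \<in> cyc H \<Longrightarrow> x + y \<in> cyc H"
  unfolding cyc_def by (auto simp: contract_add_left[symmetric])
lemma cyc_zero: "0 \<in> cyc H"
  unfolding cyc_def by (auto intro: exI[of _ 0])
lemma cyc_sum: "(\<And>i. i \<in> I \<Longrightarrow> x i \<in> cyc H) \<Longrightarrow> (\<Sum>i\<in>I. x i) \<in> cyc H"
  by (induction I rule: infinite_finite_induct) (auto simp: cyc_add cyc_zero)


section \<open>Monomials of S\<close>

abbreviation sN :: "nat \<Rightarrow> ('v option \<Rightarrow>\<^sub>0 nat)" where "sN j \<equiv> sg None j"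

lemma lookup_lift_mon: "lk (lift_mon a) x = (case x of None \<Rightarrow> 0 | Some v \<Rightarrow> lk a v)"
  by (cases x) (simp_all add: lift_mon_def lookup_sum lookup_single when_def)

lemma lookup_restr_mon: "lk (restr_mon m) v = lk m (Some v)"
  by (simp add: restr_mon_def lookup_sum lookup_single when_def)

lemma mon_eq_iff: "(m = m') \<longleftrightarrow> (lk m None = lk m' None \<and> (\<forall>v. lk m (Some v) = lk m' (Some v)))"
  by (metis option.exhaust poly_mapping_eqI)

lemma mon_decomp: "m = sN (lk m None) + lift_mon (restr_mon m)"
  by (subst mon_eq_iff) (simp add: lookup_add lookup_lift_mon lookup_restr_mon lookup_single)

lemma mon_split_eq: "(sN j + lift_mon u = sN j' + lift_mon u') \<longleftrightarrow> (j = j' \<and> u = u')"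
proof
  assume h: "sN j + lift_mon u = sN j' + lift_mon u'"
  have "lk (sN j + lift_mon u) x = lk (sN j' + lift_mon u') x" for x using h by simp
  from this[of None] this[of "Some v" for v] show "j = j' \<and> u = u'"
    by (auto simp: lookup_add lookup_lift_mon lookup_single poly_mapping_eq_iff fun_eq_iff)
qed simp

lemma mon_cond: "(lk m None = j \<and> restr_mon m = u) \<longleftrightarrow> m = sN j + lift_mon u"
  by (metis mon_decomp mon_split_eq)

lemma lift_mon_eq: "(lift_mon a = m) \<longleftrightarrow> (lk m None = 0 \<and> a = restr_mon m)"
  using mon_cond[of m 0 a] by auto

lemma restr_lift_mon: "restr_mon (sN j + lift_mon u) = u"
  using mon_cond by blast

lemma restr_lift_mon0[simp]: "restr_mon (lift_mon u) = u"
  using restr_lift_mon[of 0 u] by simp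

lemma None_lift_mon: "lk (sN j + lift_mon u) None = j"
  using mon_cond by blast

lemma lift_mon_add: "lift_mon (a + b) = lift_mon a + lift_mon b"
  by (subst mon_eq_iff) (simp add: lookup_add lookup_lift_mon)

definition coef :: "('v::finite option, 'k::comm_ring_1) mpoly \<Rightarrow> nat \<Rightarrow> ('v, 'k) mpoly" where
  "coef g j = (\<Sum>m\<in>ks g. if lk m None = j then sg (restr_mon m) (lk g m) else 0)"

lemma eval_t0_coef: "eval_t0 g = coef g 0"
  by (simp add: eval_t0_def coef_def)

lemma lookup_coef: "lk (coef g j) u = lk g (sN j + lift_mon u)"
proof -
  have "lk (coef g j) u = (\<Sum>m\<in>ks g. if m = sN j + lift_mon u then lk g m else 0)"
    unfolding coef_def lookup_sum
    by (rule sum.cong) (auto simp: lookup_single when_def mon_cond[symmetric])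
  also have "\<dots> = lk g (sN j + lift_mon u)"
    by (simp add: in_keys_iff)
  finally show ?thesis .
qed

lemma coef_eqI: "(\<And>j. coef g j = coef h j) \<Longrightarrow> g = h"
  by (metis lookup_coef mon_decomp poly_mapping_eqI)

lemma coef_add: "coef (g + h) j = coef g j + coef h j"
  by (rule poly_mapping_eqI) (simp add: lookup_coef lookup_add)
lemma coef_uminus: "coef (- g) j = - coef g j"
  by (rule poly_mapping_eqI) (simp add: lookup_coef)
lemma coef_diff: "coef (g - h) j = coef g j - coef h j"
  by (rule poly_mapping_eqI) (simp add: lookup_coef lookup_minus)
lemma coef_zero[simp]: "coef 0 j = 0"
  by (rule poly_mapping_eqI) (simp add: lookup_coef)
lemma coef_sum: "coef (\<Sum>i\<in>I. g i) j = (\<Sum>i\<in>I. coef (g i) j)"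
  by (rule poly_mapping_eqI) (simp add: lookup_coef lookup_sum)

lemma coef_single_mult:
  fixes q :: "('v::finite option, 'k::comm_ring_1) mpoly"
  shows "coef (sg (sN i) c * q) j = (if i \<le> j then sg 0 c * coef q (j - i) else 0)"
proof (rule poly_mapping_eqI)
  fix u
  have "lk (coef (sg (sN i) c * q) j) u = (\<Sum>w\<in>ks q. if sN i + w = sN j + lift_mon u then c * lk q w else 0)"
    by (simp add: lookup_coef single_mult_expand lookup_sum lookup_single when_def)
  also have "\<dots> = (if i \<le> j then c * lk q (sN (j - i) + lift_mon u) else 0)"
  proof (cases "i \<le> j")
    case True
    have "sN i + w = sN j + lift_mon u \<longleftrightarrow> w = sN (j - i) + lift_mon u" for w :: "'v option \<Rightarrow>\<^sub>0 nat"
      using True by (subst (1 2) mon_eq_iff) (auto simp: lookup_add lookup_lift_mon lookup_single)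
    then show ?thesis using True by (simp add: in_keys_iff cong: if_cong)
  next
    case False
    have "sN i + w \<noteq> sN j + lift_mon u" for w :: "'v option \<Rightarrow>\<^sub>0 nat"
      using False by (subst mon_eq_iff) (auto simp: lookup_add lookup_lift_mon lookup_single)
    then show ?thesis using False by simp
  qed
  also have "\<dots> = lk (if i \<le> j then sg 0 c * coef q (j - i) else 0) u"
    by (simp add: lookup_const_mult lookup_coef)
  finally show "lk (coef (sg (sN i) c * q) j) u = lk (if i \<le> j then sg 0 c * coef q (j - i) else 0) u" .
qed

lemma lookup_lift: "lk (lift r) m = (if lk m None = 0 then lk r (restr_mon m) else 0)"
proof -
  have "lk (lift r) m = (\<Sum>a\<in>ks r. if lk m None = 0 \<and> a = restr_mon m then lk r a else 0)"
    unfolding lift_def lookup_sum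
    by (rule sum.cong) (auto simp: lookup_single when_def lift_mon_eq)
  also have "\<dots> = (if lk m None = 0 then lk r (restr_mon m) else 0)"
    by (auto simp: in_keys_iff)
  finally show ?thesis .
qed

lemma coef_lift: "coef (lift r) j = (if j = 0 then r else 0)"
  by (rule poly_mapping_eqI) (simp add: lookup_coef lookup_lift restr_lift_mon None_lift_mon lookup_add lookup_lift_mon)

lemma coef_single_mult_lift: "coef (sg (sN i) c * lift r) j = (if j = i then sg 0 c * r else 0)"
  by (simp add: coef_single_mult coef_lift)

lemma tpoly_alt: "tpoly p = (\<Sum>i\<le>degree p. sg (sN i) (coeff p i))"
  by (simp add: tpoly_def)

lemma coef_tpoly_mult: "coef (tpoly p * q) j = (\<Sum>i\<le>degree p. if i \<le> j then sg 0 (coeff p i) * coef q (j - i) else 0)"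
  by (simp add: tpoly_def sum_distrib_right coef_sum coef_single_mult)

lemma coef_tpoly_mult_0: "coef (tpoly p * q) 0 = sg 0 (coeff p 0) * coef q 0"
  by (simp add: coef_tpoly_mult)

lemma coef_tpoly_mult_lift: "coef (tpoly p * lift b) j = sg 0 (coeff p j) * b"
proof -
  have "coef (tpoly p * lift b) j = (\<Sum>i\<le>degree p. if i = j then sg 0 (coeff p i) * b else 0)"
    unfolding coef_tpoly_mult by (rule sum.cong) (auto simp: coef_lift)
  also have "\<dots> = sg 0 (coeff p j) * b"
    by (auto simp: coeff_eq_0)
  finally show ?thesis .
qed

lemma tpoly_t: "tpoly [:0, 1:] = sg (sN 1) (1::'k::comm_ring_1)"
proof -
  have "degree [:0, 1::'k:] = 1" by simp
  then show ?thesis by (simp add: tpoly_def)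
qed


lemma coef_contract:
  fixes g H :: "('v::finite option, 'k::comm_ring_1) mpoly"
  assumes N: "\<forall>s\<in>ks g. lk s None < N"
  shows "coef (contract g H) k = (\<Sum>j<N. contract (coef g j) (coef H (k + j)))"
proof (rule poly_mapping_eqI)
  fix u
  have "lk (coef (contract g H) k) u = (\<Sum>s\<in>ks g. lk g s * lk H (sN k + lift_mon u + s))"
    by (simp add: lookup_coef lookup_contract)
  also have "\<dots> = (\<Sum>(j,w)\<in>(SIGMA j:{..<N}. ks (coef g j)). lk g (sN j + lift_mon w) * lk H (sN (k+j) + lift_mon (u + w)))"
  proof (rule sum.reindex_bij_witness[where i="\<lambda>(j,w). sN j + lift_mon w" and j="\<lambda>s. (lk s None, restr_mon s)"])
    fix a assume a: "a \<in> ks g"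
    show "(case (lk a None, restr_mon a) of (j, w) \<Rightarrow> sN j + lift_mon w) = a"
      using mon_decomp[of a] by simp
    show "(lk a None, restr_mon a) \<in> (SIGMA j:{..<N}. ks (coef g j))"
      using a N mon_decomp[of a] by (simp add: in_keys_iff lookup_coef)
    show "(case (lk a None, restr_mon a) of (j, w) \<Rightarrow> lk g (sN j + lift_mon w) * lk H (sN (k + j) + lift_mon (u + w))) =
         lk g a * lk H (sN k + lift_mon u + a)"
      apply (subst (3 4) mon_decomp[of a])
      apply (simp add: single_add lift_mon_add ac_simps)
      done
  next
    fix b assume b: "b \<in> (SIGMA j:{..<N}. ks (coef g j))"
    show "(lk (case b of (j, w) \<Rightarrow> sN j + lift_mon w) None, restr_mon (case b of (j, w) \<Rightarrow> sN j + lift_mon w)) = b"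
      by (cases b) (simp add: None_lift_mon restr_lift_mon)
    show "(case b of (j, w) \<Rightarrow> sN j + lift_mon w) \<in> ks g"
      using b by (cases b) (simp add: in_keys_iff lookup_coef)
  qed
  also have "\<dots> = (\<Sum>j<N. \<Sum>w\<in>ks (coef g j). lk g (sN j + lift_mon w) * lk H (sN (k+j) + lift_mon (u + w)))"
    by (subst sum.Sigma) auto
  also have "\<dots> = lk (\<Sum>j<N. contract (coef g j) (coef H (k + j))) u"
    by (simp add: lookup_sum lookup_contract lookup_coef add.commute)
  finally show "lk (coef (contract g H) k) u = lk (\<Sum>j<N. contract (coef g j) (coef H (k + j))) u" .
qed

lemma dp_Tdp_lift: "dp_mult (Tdp k) (lift Gi) = sg (sN k) (1::'k::comm_ring_1) * lift (Gi :: ('v::finite, 'k) mpoly)"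
proof -
  have prod1: "(\<Prod>v\<in>ks (sN k + b). (lk (sN k) v + lk b v) choose lk b v) = 1"
    if "b \<in> ks (lift Gi)" for b
  proof -
    have "lk b None = 0" using that by (auto simp: in_keys_iff lookup_lift split: if_splits)
    then show ?thesis by (intro prod.neutral) (auto simp: lookup_single when_def)
  qed
  show ?thesis
    unfolding dp_mult_def Tdp_def single_mult_expand
    by (simp del: of_nat_prod, rule sum.cong) (simp_all add: prod1 del: of_nat_prod)
qed

lemma coef_dp_Tdp_lift: "coef (dp_mult (Tdp k) (lift Gi)) j = (if j = k then Gi else 0)"
  by (simp add: dp_Tdp_lift coef_single_mult_lift)

lemma coef_Fdual: "coef (Fdual n G) j = (if j < n then G (n - 1 - j) else 0)"
proof -
  have "coef (Fdual n G) j = (\<Sum>i<n. if i = n - 1 - j \<and> j < n then G i else 0)"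
    unfolding Fdual_def coef_sum coef_dp_Tdp_lift
    by (rule sum.cong) auto
  also have "\<dots> = (if j < n then G (n - 1 - j) else 0)"
    by (auto simp: sum.delta' cong: if_cong)
  finally show ?thesis .
qed

lemma exists_bound: "\<exists>N\<ge>n. \<forall>s\<in>ks (g :: ('v option, 'k::comm_ring_1) mpoly). lk s None < N"
proof (intro exI conjI ballI)
  fix s assume "s \<in> ks g"
  then have "lk s None \<le> (\<Sum>s\<in>ks g. lk s None)" by (intro member_le_sum) auto
  then show "lk s None < n + Suc (\<Sum>s\<in>ks g. lk s None)" by simp
qed simp

lemma coef_contract_F:
  fixes G :: "nat \<Rightarrow> ('v::finite, 'k::comm_ring_1) mpoly"
  assumes "k < n"
  shows "coef (contract g (Fdual n G)) k = (\<Sum>j<n - k. contract (coef g j) (G (n - 1 - k - j)))"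
proof -
  obtain N where N: "N \<ge> n" "\<forall>s\<in>ks g. lk s None < N" using exists_bound by blast
  have "coef (contract g (Fdual n G)) k = (\<Sum>j<N. if j < n - k then contract (coef g j) (G (n - 1 - k - j)) else 0)"
    unfolding coef_contract[OF N(2)] coef_Fdual
    by (rule sum.cong) (auto simp: diff_diff_add)
  also have "\<dots> = (\<Sum>j<n - k. contract (coef g j) (G (n - 1 - k - j)))"
    using N(1) by (intro sum.mono_neutral_cong_right) auto
  finally show ?thesis .
qed

lemma coef_contract_F_big:
  fixes G :: "nat \<Rightarrow> ('v::finite, 'k::comm_ring_1) mpoly"
  assumes "n \<le> k"
  shows "coef (contract g (Fdual n G)) k = 0"
proof -
  obtain N where N: "N \<ge> n" "\<forall>s\<in>ks g. lk s None < N" using exists_bound by blast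
  show ?thesis
    unfolding coef_contract[OF N(2)] coef_Fdual using assms by simp
qed

definition eqn :: "(nat \<Rightarrow> ('x, 'k::comm_ring_1) mpoly) \<Rightarrow> (nat \<Rightarrow> ('x, 'k) mpoly) \<Rightarrow> nat \<Rightarrow> bool" where
  "eqn G d s \<longleftrightarrow> (\<Sum>j<Suc s. contract (d j) (G (s - j))) = 0"

lemma AnnF:
  fixes G :: "nat \<Rightarrow> ('v::finite, 'k::comm_ring_1) mpoly"
  shows "g \<in> Ann (Fdual n G) \<longleftrightarrow> (\<forall>s<n. eqn G (coef g) s)"
proof -
  have "g \<in> Ann (Fdual n G) \<longleftrightarrow> (\<forall>k. coef (contract g (Fdual n G)) k = 0)"
    unfolding Ann_def using coef_eqI[of "contract g (Fdual n G)" 0] by auto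
  also have "\<dots> \<longleftrightarrow> (\<forall>k<n. coef (contract g (Fdual n G)) k = 0)"
    using coef_contract_F_big[of n] by (meson not_less)
  also have "\<dots> \<longleftrightarrow> (\<forall>s<n. eqn G (coef g) s)"
  proof
    assume h: "\<forall>k<n. coef (contract g (Fdual n G)) k = 0"
    show "\<forall>s<n. eqn G (coef g) s"
    proof (intro allI impI)
      fix s assume s: "s < n"
      have "coef (contract g (Fdual n G)) (n - 1 - s) = 0" using h s by simp
      then show "eqn G (coef g) s"
        using s by (simp add: coef_contract_F eqn_def Suc_diff_Suc)
    qed
  next
    assume h: "\<forall>s<n. eqn G (coef g) s"
    show "\<forall>k<n. coef (contract g (Fdual n G)) k = 0"
    proof (intro allI impI)
      fix k assume k: "k < n"
      have "eqn G (coef g) (n - 1 - k)" using h k by simp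
      moreover have "n - k = Suc (n - 1 - k)" using k by simp
      ultimately show "coef (contract g (Fdual n G)) k = 0"
        using k by (simp add: coef_contract_F eqn_def)
    qed
  qed
  finally show ?thesis .
qed


section \<open>Solving the equations\<close>

lemma eqn_Iseq:
  fixes G :: "nat \<Rightarrow> ('x, 'k::comm_ring_1) mpoly"
  assumes "eqn G d s"
  shows "d s \<in> Iseq G s"
proof (rule L_lemma[where q="\<lambda>i. - d (s - i)"])
  have a1: "(\<Sum>j<s. contract (d j) (G (s - j))) + contract (d s) (G 0) = 0"
    using assms by (simp add: eqn_def)
  have a2: "(\<Sum>j<s. contract (d j) (G (s - j))) = (\<Sum>i\<in>{1..s}. contract (d (s - i)) (G i))"
    by (rule sum.reindex_bij_witness[where i="\<lambda>i. s - i" and j="\<lambda>i. s - i"]) auto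
  have "contract (d s) (G 0) = - (\<Sum>j<s. contract (d j) (G (s - j)))"
    using minus_unique[OF a1] by simp
  also have "\<dots> = (\<Sum>i\<in>{1..s}. contract (- d (s - i)) (G i))"
    unfolding a2 by (simp only: contract_uminus_left sum_negf)
  finally show "contract (d s) (G 0) = (\<Sum>i\<in>{1..s}. contract (- d (s - i)) (G i))" .
qed

lemma eqn_cong: "(\<And>j. j \<le> s \<Longrightarrow> d j = d' j) \<Longrightarrow> eqn G d s \<longleftrightarrow> eqn G d' s"
  unfolding eqn_def by (intro arg_cong[where f="\<lambda>x. x = 0"] sum.cong) auto

lemma extend:
  fixes G :: "nat \<Rightarrow> ('x, 'k::comm_ring_1) mpoly"
  assumes hyp: "\<forall>i\<le>n-1. contract_set (Iseq G i) (G (n - 1 - i)) \<subseteq> cyc (G 0)"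
    and n: "1 \<le> n"
    and dz: "P 0 dz" "dz \<in> Ann (G 0)"
    and step: "\<And>s r. 1 \<le> s \<Longrightarrow> s < n \<Longrightarrow> \<exists>d. P s d \<and> d - r \<in> Ann (G 0)"
  shows "\<exists>d. \<forall>s<n. P s (d s) \<and> eqn G d s"
proof -
  have "m < n \<Longrightarrow> \<exists>d. \<forall>s\<le>m. P s (d s) \<and> eqn G d s" for m
  proof (induction m)
    case 0
    show ?case
      by (rule exI[of _ "\<lambda>_. dz"]) (use dz in \<open>simp add: eqn_def Ann_def\<close>)
  next
    case (Suc m)
    then obtain d where d: "\<forall>s\<le>m. P s (d s) \<and> eqn G d s" by auto
    have terms: "contract (d j) (G (Suc m - j)) \<in> cyc (G 0)" if j: "j < Suc m" for j
    proof -
      have "d j \<in> Iseq G j" using d j by (intro eqn_Iseq) simp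
      moreover have "j \<le> j + (n - 2 - m)" by simp
      ultimately have "d j \<in> Iseq G (j + (n - 2 - m))" using Iseq_mono by blast
      moreover have "n - 1 - (j + (n - 2 - m)) = Suc m - j" "j + (n - 2 - m) \<le> n - 1"
        using j Suc.prems by auto
      ultimately show ?thesis using hyp unfolding contract_set_def by fastforce
    qed
    have "(\<Sum>j<Suc m. contract (d j) (G (Suc m - j))) \<in> cyc (G 0)"
      by (rule cyc_sum) (use terms in auto)
    then obtain q where q: "(\<Sum>j<Suc m. contract (d j) (G (Suc m - j))) = contract q (G 0)"
      unfolding cyc_def by auto
    obtain d' where d': "P (Suc m) d'" "d' - (- q) \<in> Ann (G 0)"
      using step[of "Suc m" "- q"] Suc.prems by auto
    let ?d = "d(Suc m := d')"
    have "\<forall>s\<le>Suc m. P s (?d s) \<and> eqn G ?d s"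
    proof (intro allI impI)
      fix s assume s: "s \<le> Suc m"
      show "P s (?d s) \<and> eqn G ?d s"
      proof (cases "s = Suc m")
        case True
        have "(\<Sum>j<Suc (Suc m). contract (?d j) (G (Suc m - j))) = contract q (G 0) + contract d' (G 0)"
          using q by simp
        also have "\<dots> = 0"
          using d'(2) by (simp add: Ann_def contract_add_left[symmetric] add.commute)
        finally show ?thesis using True d' by (simp add: eqn_def)
      next
        case False
        then have "s \<le> m" using s by simp
        moreover have "eqn G ?d s \<longleftrightarrow> eqn G d s"
          by (rule eqn_cong) (use \<open>s \<le> m\<close> in auto)
        ultimately show ?thesis using d False by auto
      qed
    qed
    then show ?case by blast
  qed
  note X = this
  have "n - 1 < n" using n by simp
  from X[OF this] obtain d where d: "\<forall>s\<le>n - 1. P s (d s) \<and> eqn G d s" by blast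
  have "\<forall>s<n. P s (d s) \<and> eqn G d s"
  proof (intro allI impI)
    fix s assume "s < n" then have "s \<le> n - 1" by simp
    then show "P s (d s) \<and> eqn G d s" using d by blast
  qed
  then show ?thesis by blast
qed

lemma coef_vanish: "\<forall>s\<in>ks g. lk s None < N \<Longrightarrow> N \<le> i \<Longrightarrow> coef g i = 0"
proof (rule poly_mapping_eqI)
  fix u assume N: "\<forall>s\<in>ks g. lk s None < N" "N \<le> i"
  have "sN i + lift_mon u \<notin> ks g"
    using N None_lift_mon[of i u] by force
  then show "lk (coef g i) u = lk 0 u" by (simp add: lookup_coef in_keys_iff)
qed

lemma sg01[simp]: "sg 0 (1::'k::comm_ring_1) * (r :: ('x, 'k) mpoly) = r"
  by (simp add: one_poly_mapping.abs_eq[symmetric] single.abs_eq[symmetric])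

lemma coef_build: "coef (\<Sum>j<N. sg (sN j) (1::'k::comm_ring_1) * lift (d j)) i = (if i < N then d i else 0)"
  by (simp add: coef_sum coef_single_mult_lift)

lemma div_t:
  fixes g :: "('v::finite option, 'k::comm_ring_1) mpoly"
  assumes "coef g 0 = 0"
  shows "\<exists>c. g = sg (sN 1) 1 * c"
proof -
  obtain N where N: "\<forall>s\<in>ks g. lk s None < N" using exists_bound by blast
  let ?c = "\<Sum>j<N. sg (sN j) (1::'k) * lift (coef g (Suc j))"
  have "g = sg (sN 1) 1 * ?c"
  proof (rule coef_eqI)
    fix i
    show "coef g i = coef (sg (sN 1) 1 * ?c) i"
    proof (cases i)
      case 0 then show ?thesis using assms by (simp add: coef_single_mult)
    next
      case (Suc i')
      then show ?thesis using coef_vanish[OF N, of i]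
        by (simp add: coef_single_mult coef_build)
    qed
  qed
  then show ?thesis by blast
qed

lemma ker_forward:
  fixes G :: "nat \<Rightarrow> ('v::finite, 'k::comm_ring_1) mpoly"
  assumes hyp: "\<forall>i\<le>n-1. contract_set (Iseq G i) (G (n - 1 - i)) \<subseteq> cyc (G 0)"
    and n: "1 \<le> n"
    and g0: "coef g 0 \<in> Ann (G 0)"
  shows "\<exists>c. g - sg (sN 1) 1 * c \<in> Ann (Fdual n G)"
proof -
  have st: "\<exists>d. (s = 0 \<longrightarrow> d = coef g 0) \<and> d - r \<in> Ann (G 0)" if "1 \<le> s" for s :: nat and r
    using that by (intro exI[of _ r]) (auto simp: Ann_zero)
  obtain d where d: "\<forall>s<n. (s = 0 \<longrightarrow> d s = coef g 0) \<and> eqn G d s"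
    using extend[OF hyp n, where P="\<lambda>s d. s = 0 \<longrightarrow> d = coef g 0" and dz="coef g 0", OF _ g0 st] by auto
  let ?H = "\<Sum>j<n. sg (sN j) (1::'k) * lift (d j)"
  have HA: "?H \<in> Ann (Fdual n G)"
    unfolding AnnF
  proof (intro allI impI)
    fix s assume s: "s < n"
    have "eqn G (coef ?H) s \<longleftrightarrow> eqn G d s"
      by (rule eqn_cong) (use s in \<open>simp add: coef_build\<close>)
    then show "eqn G (coef ?H) s" using d s by simp
  qed
  have "d 0 = coef g 0" using d n by auto
  then have "coef (g - ?H) 0 = 0" using n by (simp add: coef_diff coef_build)
  then obtain c where c: "g - ?H = sg (sN 1) 1 * c" using div_t by blast
  have "g - sg (sN 1) 1 * c = ?H" using c by (simp add: algebra_simps)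
  then show ?thesis using HA by (intro exI[of _ c]) simp
qed


lemma pi_surj_holds: "pi_surj FB F"
  unfolding pi_surj_def
proof
  fix r
  show "\<exists>g. eval_t0 g - r \<in> Ann FB"
    by (rule exI[of _ "lift r"]) (simp add: eval_t0_coef coef_lift Ann_zero)
qed

lemma coef_E0:
  assumes "\<forall>k<m. coeff (a k) 0 = (0::'k::comm_ring_1)"
  shows "coef (\<Sum>k<m. tpoly (a k) * (c k :: ('v::finite option, 'k) mpoly)) 0 = 0"
  using assms by (simp add: coef_sum coef_tpoly_mult_0)

lemma ker_back:
  fixes G :: "nat \<Rightarrow> ('v::finite, 'k::comm_ring_1) mpoly"
  assumes n: "1 \<le> n"
    and a: "\<forall>k<m. coeff (a k) 0 = 0"
    and h: "g - (\<Sum>k<m. tpoly (a k) * c k) \<in> Ann (Fdual n G)"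
  shows "coef g 0 \<in> Ann (G 0)"
proof -
  have "eqn G (coef (g - (\<Sum>k<m. tpoly (a k) * c k))) 0"
    using h n unfolding AnnF by auto
  then show ?thesis
    using coef_E0[OF a, of c] by (simp add: eqn_def coef_diff Ann_def)
qed

lemma ker_eq_holds:
  fixes G :: "nat \<Rightarrow> ('v::finite, 'k::comm_ring_1) mpoly"
  assumes hyp: "\<forall>i\<le>n-1. contract_set (Iseq G i) (G (n - 1 - i)) \<subseteq> cyc (G 0)"
    and n: "1 \<le> n"
  shows "ker_eq (G 0) (Fdual n G)"
  unfolding ker_eq_def
proof (intro allI iffI)
  fix g :: "('v option, 'k) mpoly"
  assume "eval_t0 g \<in> Ann (G 0)"
  then obtain c where c: "g - sg (sN 1) 1 * c \<in> Ann (Fdual n G)"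
    using ker_forward[OF hyp n] by (auto simp: eval_t0_coef)
  show "\<exists>m (a :: nat \<Rightarrow> 'k poly) (c :: nat \<Rightarrow> ('v option, 'k) mpoly).
           (\<forall>k<m. coeff (a k) 0 = 0) \<and> g - (\<Sum>k<m. tpoly (a k) * c k) \<in> Ann (Fdual n G)"
    by (rule exI[of _ 1], rule exI[of _ "\<lambda>_. [:0, 1:]"], rule exI[of _ "\<lambda>_. c"]) (use c in \<open>simp add: tpoly_t\<close>)
next
  fix g :: "('v option, 'k) mpoly"
  assume "\<exists>m (a :: nat \<Rightarrow> 'k poly) (c :: nat \<Rightarrow> ('v option, 'k) mpoly).
           (\<forall>k<m. coeff (a k) 0 = 0) \<and> g - (\<Sum>k<m. tpoly (a k) * c k) \<in> Ann (Fdual n G)"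
  then obtain m and a :: "nat \<Rightarrow> 'k poly" and c where
    "\<forall>k<m. coeff (a k) 0 = 0" "g - (\<Sum>k<m. tpoly (a k) * c k) \<in> Ann (Fdual n G)" by blast
  then show "eval_t0 g \<in> Ann (G 0)"
    using ker_back[OF n] by (simp add: eval_t0_coef)
qed

lemma part2:
  fixes G :: "nat \<Rightarrow> ('v::finite, 'k::comm_ring_1) mpoly"
  assumes n: "1 \<le> n" and ker: "ker_eq (G 0) (Fdual n G)"
    and i: "1 \<le> i" "i \<le> n - 1"
  shows "contract_set (Iseq G 0) (G i) \<subseteq> sum_cyc G i"
proof
  fix x assume "x \<in> contract_set (Iseq G 0) (G i)"
  then obtain f where f: "f \<in> Ann (G 0)" "x = contract f (G i)"
    by (auto simp: contract_set_def)
  have "eval_t0 (lift f) \<in> Ann (G 0)" using f by (simp add: eval_t0_coef coef_lift)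
  then obtain m and a :: "nat \<Rightarrow> 'k poly" and c where
    a: "\<forall>k<m. coeff (a k) 0 = 0" and h: "lift f - (\<Sum>k<m. tpoly (a k) * c k) \<in> Ann (Fdual n G)"
    using ker unfolding ker_eq_def by blast
  define h where "h = lift f - (\<Sum>k<m. tpoly (a k) * c k)"
  have h0: "coef h 0 = f" using coef_E0[OF a, of c] by (simp add: h_def coef_diff coef_lift)
  have "eqn G (coef h) i" using h i n unfolding AnnF h_def[symmetric] by auto
  then have "contract f (G i) + (\<Sum>j<i. contract (coef h (Suc j)) (G (i - Suc j))) = 0"
    unfolding eqn_def sum.lessThan_Suc_shift using h0 by simp
  then have "contract f (G i) = - (\<Sum>j<i. contract (coef h (Suc j)) (G (i - Suc j)))"
    by (simp add: eq_neg_iff_add_eq_0)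
  also have "\<dots> = (\<Sum>j<i. contract (- coef h (i - (i - Suc j))) (G (i - Suc j)))"
    by (simp add: sum_negf contract_uminus_left Suc_diff_Suc)
  also have "\<dots> = (\<Sum>j<i. contract (- coef h (i - j)) (G j))"
    by (rule sum.nat_diff_reindex)
  finally show "x \<in> sum_cyc G i"
    unfolding sum_cyc_def f(2) by (intro CollectI exI[of _ "\<lambda>j. - coef h (i - j)"]) simp
qed


section \<open>Basis of R / Ann H\<close>

definition lc :: "(nat \<Rightarrow> 'k::comm_ring_1) \<Rightarrow> ('x, 'k) mpoly list \<Rightarrow> ('x, 'k) mpoly" where
  "lc \<beta> bs = (\<Sum>j<length bs. sg 0 (\<beta> j) * bs ! j)"

definition spanA :: "('x, 'k::comm_ring_1) mpoly \<Rightarrow> ('x, 'k) mpoly list \<Rightarrow> ('x, 'k) mpoly set" where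
  "spanA H bs = {r. \<exists>\<beta>. r - lc \<beta> bs \<in> Ann H}"

definition indepA :: "('x, 'k::comm_ring_1) mpoly \<Rightarrow> ('x, 'k) mpoly list \<Rightarrow> bool" where
  "indepA H bs \<longleftrightarrow> (\<forall>\<beta>. lc \<beta> bs \<in> Ann H \<longrightarrow> (\<forall>j<length bs. \<beta> j = 0))"

lemma lc_Cons: "lc \<beta> (d # bs) = sg 0 (\<beta> 0) * d + lc (\<lambda>j. \<beta> (Suc j)) bs"
  unfolding lc_def length_Cons sum.lessThan_Suc_shift by simp

lemma lc_add: "lc (\<lambda>j. \<beta>1 j + \<beta>2 j) bs = lc \<beta>1 bs + lc \<beta>2 bs"
  by (simp add: lc_def single_add distrib_right sum.distrib)

lemma lc_smul: "lc (\<lambda>j. c * \<beta> j) bs = sg 0 c * lc \<beta> bs"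
  unfolding lc_def sum_distrib_left by (rule sum.cong) (simp_all add: mult.assoc[symmetric] mult_single)

lemma lc_zero: "lc (\<lambda>_. 0) bs = 0"
  by (simp add: lc_def)

lemma lc_cong: "(\<And>j. j < length bs \<Longrightarrow> \<beta> j = \<beta>' j) \<Longrightarrow> lc \<beta> bs = lc \<beta>' bs"
  unfolding lc_def by (rule sum.cong) auto

lemma spanA_Ann: "r \<in> Ann H \<Longrightarrow> r \<in> spanA H bs"
  unfolding spanA_def by (intro CollectI exI[of _ "\<lambda>_. 0"]) (simp add: lc_zero)

lemma spanA_add: "r1 \<in> spanA H bs \<Longrightarrow> r2 \<in> spanA H bs \<Longrightarrow> r1 + r2 \<in> spanA H bs"
proof -
  assume "r1 \<in> spanA H bs" "r2 \<in> spanA H bs"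
  then obtain \<beta>1 \<beta>2 where "r1 - lc \<beta>1 bs \<in> Ann H" "r2 - lc \<beta>2 bs \<in> Ann H"
    by (auto simp: spanA_def)
  then have "(r1 + r2) - lc (\<lambda>j. \<beta>1 j + \<beta>2 j) bs \<in> Ann H"
    using Ann_add by (fastforce simp: lc_add algebra_simps)
  then show ?thesis unfolding spanA_def by blast
qed

lemma spanA_smul: "r \<in> spanA H bs \<Longrightarrow> sg 0 c * r \<in> spanA H bs"
proof -
  assume "r \<in> spanA H bs"
  then obtain \<beta> where "r - lc \<beta> bs \<in> Ann H" by (auto simp: spanA_def)
  then have "sg 0 c * (r - lc \<beta> bs) \<in> Ann H" by (rule Ann_mult)
  then have "sg 0 c * r - lc (\<lambda>j. c * \<beta> j) bs \<in> Ann H" by (simp add: lc_smul algebra_simps)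
  then show ?thesis unfolding spanA_def by blast
qed

lemma spanA_sum: "(\<And>i. i \<in> I \<Longrightarrow> x i \<in> spanA H bs) \<Longrightarrow> (\<Sum>i\<in>I. x i) \<in> spanA H bs"
  by (induction I rule: infinite_finite_induct) (auto simp: spanA_add spanA_Ann Ann_zero)

lemma extract_basis:
  fixes H :: "('x, 'k::field) mpoly"
  shows "\<exists>bs. indepA H bs \<and> set ds \<subseteq> spanA H bs"
proof (induction ds)
  case Nil
  show ?case by (rule exI[of _ "[]"]) (simp add: indepA_def)
next
  case (Cons d ds)
  then obtain bs where bs: "indepA H bs" "set ds \<subseteq> spanA H bs" by blast
  show ?case
  proof (cases "d \<in> spanA H bs")
    case True then show ?thesis using bs by auto
  next
    case False
    have sub: "spanA H bs \<subseteq> spanA H (d # bs)"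
    proof
      fix r assume "r \<in> spanA H bs"
      then obtain \<beta> where "r - lc \<beta> bs \<in> Ann H" by (auto simp: spanA_def)
      moreover have "lc (case_nat 0 \<beta>) (d # bs) = lc \<beta> bs" by (simp add: lc_Cons)
      ultimately show "r \<in> spanA H (d # bs)" unfolding spanA_def by (metis (mono_tags) CollectI)
    qed
    have din: "d \<in> spanA H (d # bs)"
    proof -
      have "lc (\<lambda>j. if j = 0 then 1 else 0) (d # bs) = d" by (simp add: lc_Cons lc_zero)
      then show ?thesis unfolding spanA_def by (intro CollectI exI[of _ "\<lambda>j. if j = 0 then 1 else 0"]) (simp add: Ann_zero)
    qed
    have ind: "indepA H (d # bs)"
      unfolding indepA_def
    proof (rule allI, rule impI)
      fix \<beta> assume A: "lc \<beta> (d # bs) \<in> Ann H"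
      have b0: "\<beta> 0 = 0"
      proof (rule ccontr)
        assume nz: "\<beta> 0 \<noteq> 0"
        let ?c = "inverse (\<beta> 0)"
        have "sg 0 ?c * lc \<beta> (d # bs) \<in> Ann H" using A by (rule Ann_mult)
        moreover have "sg 0 ?c * lc \<beta> (d # bs) = d - lc (\<lambda>j. - (?c * \<beta> (Suc j))) bs"
        proof -
          have "sg 0 ?c * lc \<beta> (d # bs) = sg 0 (?c * \<beta> 0) * d + lc (\<lambda>j. ?c * \<beta> (Suc j)) bs"
            by (simp add: lc_Cons lc_smul distrib_left mult.assoc[symmetric] mult_single)
          also have "\<dots> = d + lc (\<lambda>j. ?c * \<beta> (Suc j)) bs" using nz by simp
          also have "lc (\<lambda>j. ?c * \<beta> (Suc j)) bs = - lc (\<lambda>j. - (?c * \<beta> (Suc j))) bs"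
            using lc_smul[of "-1" "\<lambda>j. - (?c * \<beta> (Suc j))" bs] by (simp add: single_uminus)
          finally show ?thesis by simp
        qed
        ultimately have "d \<in> spanA H bs" unfolding spanA_def by auto
        then show False using False by simp
      qed
      then have "lc (\<lambda>j. \<beta> (Suc j)) bs \<in> Ann H" using A by (simp add: lc_Cons)
      then have "\<forall>j<length bs. \<beta> (Suc j) = 0" using bs(1) unfolding indepA_def by (metis (no_types, lifting))
      then show "\<forall>j<length (d # bs). \<beta> j = 0"
        using b0 by (auto simp: less_Suc_eq_0_disj)
    qed
    show ?thesis using ind sub din bs(2) by (intro exI[of _ "d # bs"]) auto
  qed
qed

lemma inj_lk: "inj (Poly_Mapping.lookup :: ('v \<Rightarrow>\<^sub>0 nat) \<Rightarrow> _)"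
  by (rule injI) (simp add: poly_mapping_eqI)
lemma finite_below: "finite {s :: ('v::finite \<Rightarrow>\<^sub>0 nat). \<forall>v. lk s v \<le> lk a v}"
proof -
  have "finite (Pi\<^sub>E UNIV (\<lambda>v. {..lk a v}))" by (rule finite_PiE) auto
  then have "finite (Poly_Mapping.lookup -` (Pi\<^sub>E UNIV (\<lambda>v. {..lk a v})))"
    by (rule finite_vimageI) (rule inj_lk)
  moreover have "{s. \<forall>v. lk s v \<le> lk a v} \<subseteq> Poly_Mapping.lookup -` (Pi\<^sub>E UNIV (\<lambda>v. {..lk a v}))"
  proof
    fix s assume "s \<in> {s. \<forall>v. lk s v \<le> lk a v}"
    then show "s \<in> Poly_Mapping.lookup -` (Pi\<^sub>E UNIV (\<lambda>v. {..lk a v}))"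
      unfolding PiE_UNIV_domain by (simp add: Pi_iff)
  qed
  ultimately show ?thesis by (rule finite_subset[rotated])
qed

lemma basis_exists:
  fixes H :: "('v::finite, 'k::field) mpoly"
  shows "\<exists>bs. indepA H bs \<and> (\<forall>r. r \<in> spanA H bs)"
proof -
  define D where "D = {s. \<exists>a\<in>ks H. \<forall>v. lk s v \<le> lk a v}"
  have "D = (\<Union>a\<in>ks H. {s. \<forall>v. lk s v \<le> lk a v})" by (auto simp: D_def)
  then have "finite D" by (simp add: finite_below)
  then obtain ds where ds: "set ds = D" using finite_list by blast
  obtain bs where bs: "indepA H bs" "set (map (\<lambda>s. sg s 1) ds) \<subseteq> spanA H bs" using extract_basis by blast
  have out: "sg s c \<in> Ann H" if "s \<notin> D" for s c
  proof -
    have "contract (sg s c) H = 0"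
    proof (rule poly_mapping_eqI)
      fix b
      have "b + s \<notin> ks H" using that by (auto simp: D_def lookup_add)
      then show "lk (contract (sg s c) H) b = lk 0 b" by (simp add: lookup_contract_single in_keys_iff)
    qed
    then show ?thesis by (simp add: Ann_def)
  qed
  have "r \<in> spanA H bs" for r
  proof -
    have "(\<Sum>s\<in>ks r. sg s (lk r s)) \<in> spanA H bs"
    proof (rule spanA_sum)
      fix s assume "s \<in> ks r"
      show "sg s (lk r s) \<in> spanA H bs"
      proof (cases "s \<in> D")
        case True
        then have "sg s 1 \<in> spanA H bs" using bs ds by auto
        then have "sg 0 (lk r s) * sg s 1 \<in> spanA H bs" by (rule spanA_smul)
        then show ?thesis by (simp add: mult_single)
      next
        case False then show ?thesis using out spanA_Ann by blast
      qed
    qed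
    then show ?thesis by (simp add: pm_expand)
  qed
  then show ?thesis using bs by blast
qed


section \<open>Freeness\<close>

lemma tn_dvd:
  fixes p :: "'k::comm_ring_1 poly"
  assumes "\<forall>i<n. coeff p i = 0"
  shows "[:0, 1:] ^ n dvd p"
proof -
  have "p = monom 1 n * poly_shift n p"
    by (rule poly_eqI) (use assms in \<open>simp add: coeff_monom_mult coeff_poly_shift\<close>)
  then have "p = [:0, 1:] ^ n * poly_shift n p" by (simp add: monom_altdef)
  then show ?thesis by (metis dvd_triv_left)
qed

lemma coef_E_lift:
  "coef (\<Sum>j<length bs. tpoly (a j) * lift (bs ! j)) i = lc (\<lambda>j. coeff (a j) i) (bs :: ('v::finite, 'k::comm_ring_1) mpoly list)"
  by (simp add: coef_sum coef_tpoly_mult_lift lc_def)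

lemma free_holds:
  fixes G :: "nat \<Rightarrow> ('v::finite, 'k::field) mpoly"
  assumes hyp: "\<forall>i\<le>n-1. contract_set (Iseq G i) (G (n - 1 - i)) \<subseteq> cyc (G 0)"
    and n: "1 \<le> n"
  shows "free_over_A n (Fdual n G)"
proof -
  obtain bs where bs: "indepA (G 0) bs" "\<forall>r. r \<in> spanA (G 0) bs" using basis_exists by blast
  let ?m = "length bs"
  let ?b = "\<lambda>j. lift (bs ! j)"
  have span: "\<exists>a :: nat \<Rightarrow> 'k poly. g - (\<Sum>j<?m. tpoly (a j) * ?b j) \<in> Ann (Fdual n G)" for g
  proof -
    let ?P = "\<lambda>s d. \<exists>\<beta>. d = coef g s - lc \<beta> bs"
    have st: "\<exists>d. ?P s d \<and> d - r \<in> Ann (G 0)" for s r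
    proof -
      obtain \<beta> where "(coef g s - r) - lc \<beta> bs \<in> Ann (G 0)" using bs(2) by (auto simp: spanA_def)
      then show ?thesis by (intro exI[of _ "coef g s - lc \<beta> bs"]) (auto simp: algebra_simps)
    qed
    obtain dz where dz: "?P 0 dz" "dz \<in> Ann (G 0)" using st[of 0 0] by auto
    obtain d where d: "\<forall>s<n. ?P s (d s) \<and> eqn G d s"
      using extend[OF hyp n, where P="?P", OF dz st] by blast
    define \<beta> where "\<beta> s = (SOME \<beta>. d s = coef g s - lc \<beta> bs)" for s
    have \<beta>: "d s = coef g s - lc (\<beta> s) bs" if "s < n" for s
      using d that unfolding \<beta>_def by (metis (mono_tags, lifting) someI_ex)
    define a where "a j = (\<Sum>s<n. monom (\<beta> s j) s)" for j
    have ca: "coeff (a j) i = (if i < n then \<beta> i j else 0)" for i j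
      by (simp add: a_def coeff_sum)
    let ?E = "\<Sum>j<?m. tpoly (a j) * ?b j"
    have cE: "coef (g - ?E) i = d i" if "i < n" for i
      using that by (simp add: coef_diff coef_E_lift ca \<beta>)
    have "g - ?E \<in> Ann (Fdual n G)"
      unfolding AnnF
    proof (intro allI impI)
      fix s assume s: "s < n"
      have "eqn G (coef (g - ?E)) s \<longleftrightarrow> eqn G d s"
        by (rule eqn_cong) (use s cE in auto)
      then show "eqn G (coef (g - ?E)) s" using d s by simp
    qed
    then show ?thesis by blast
  qed
  have indep: "\<forall>j<?m. [:0, 1:] ^ n dvd a j"
    if A: "(\<Sum>j<?m. tpoly (a j) * ?b j) \<in> Ann (Fdual n G)" for a :: "nat \<Rightarrow> 'k poly"
  proof (rule ccontr)
    assume "\<not> (\<forall>j<?m. [:0, 1:] ^ n dvd a j)"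
    then obtain j0 where j0: "j0 < ?m" "\<not> [:0, 1:] ^ n dvd a j0" by blast
    then obtain i0 where i0: "i0 < n" "coeff (a j0) i0 \<noteq> 0" using tn_dvd by blast
    let ?Q = "\<lambda>i. i < n \<and> (\<exists>j<?m. coeff (a j) i \<noteq> 0)"
    define e where "e = (LEAST i. ?Q i)"
    have Qe: "?Q e" unfolding e_def by (rule LeastI[of ?Q i0]) (use i0 j0 in blast)
    have below: "coeff (a j) i = 0" if "i < e" "j < ?m" for i j
    proof -
      have "\<not> ?Q i" using that(1) unfolding e_def by (rule not_less_Least)
      then show ?thesis using that Qe by auto
    qed
    let ?E = "\<Sum>j<?m. tpoly (a j) * ?b j"
    have "eqn G (coef ?E) e" using A Qe unfolding AnnF by auto
    moreover have "coef ?E i = 0" if "i < e" for i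
      unfolding coef_E_lift using below[OF that] lc_cong[of bs "\<lambda>j. coeff (a j) i" "\<lambda>_. 0"]
      by (simp add: lc_zero)
    ultimately have "contract (coef ?E e) (G 0) = 0"
      by (simp add: eqn_def)
    then have "lc (\<lambda>j. coeff (a j) e) bs \<in> Ann (G 0)"
      by (simp add: Ann_def coef_E_lift)
    then have "\<forall>j<?m. coeff (a j) e = 0" using bs(1) unfolding indepA_def by blast
    then show False using Qe by auto
  qed
  show ?thesis
    unfolding free_over_A_def
    by (rule exI[of _ ?m], rule exI[of _ ?b]) (use span indep in blast)
qed


theorem theorem2p1:
  fixes FB :: "('v::finite, 'k::field) mpoly"
    and G :: "nat \<Rightarrow> ('v, 'k) mpoly"
    and n jB :: nat
  assumes "n \<ge> 2"
    and "homogeneous jB FB"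
    and "G 0 = FB"
    and "\<forall>i\<in>{1..n-1}. homogeneous (jB + i) (G i)"
  shows "((\<forall>i\<le>n-1. contract_set (Iseq G i) (G (n - 1 - i)) \<subseteq> cyc FB)
            \<longrightarrow> coexact FB (Fdual n G) \<and> free_extension n FB (Fdual n G))
       \<and> (free_extension n FB (Fdual n G)
            \<longrightarrow> (\<forall>i\<in>{1..n-1}. contract_set (Iseq G 0) (G i) \<subseteq> sum_cyc G i))"
proof (intro conjI impI)
  have n: "1 \<le> n" using assms(1) by simp
  assume hyp0: "\<forall>i\<le>n-1. contract_set (Iseq G i) (G (n - 1 - i)) \<subseteq> cyc FB"
  then have hyp: "\<forall>i\<le>n-1. contract_set (Iseq G i) (G (n - 1 - i)) \<subseteq> cyc (G 0)"
    using assms(3) by simp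
  have k: "ker_eq FB (Fdual n G)" using ker_eq_holds[OF hyp n] assms(3) by simp
  have f: "free_over_A n (Fdual n G)" using free_holds[OF hyp n] .
  show "coexact FB (Fdual n G)" unfolding coexact_def using k pi_surj_holds by blast
  show "free_extension n FB (Fdual n G)" unfolding free_extension_def using k f pi_surj_holds by blast
next
  have n: "1 \<le> n" using assms(1) by simp
  assume "free_extension n FB (Fdual n G)"
  then have k: "ker_eq (G 0) (Fdual n G)" using assms(3) by (simp add: free_extension_def)
  show "\<forall>i\<in>{1..n-1}. contract_set (Iseq G 0) (G i) \<subseteq> sum_cyc G i"
    using part2[OF n k] by auto
qed

end
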